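(* Let $n\ge 2$, let $p, p', s \in B_{n}$ be braids satisfying $p' = s*p$ in $B_{n+1}$, and let $s'\in B_{n+1}$. Then $$p'\, \delta_{n+1}^{-1} = s' \cdot d(p)\, \sigma_1\, \delta_{n+1}^{-1} \cdot s'^{-1} \ \text{ in } B_{n+1} \iff s'^{-1} s\in C_{B_{n+1}}\big(d(p)\, \sigma_1\, \delta_{n+1}^{-1}\big),$$ where $C_{B_{n+1}}(x)$ denotes the centralizer of $x$ in $B_{n+1}$.
   Context: $B_m$ denotes the braid group on $m$ strands with Artin generators $\sigma_1,\dots,\sigma_{m-1}$ and relations $\sigma_i\sigma_j\sigma_i=\sigma_j\sigma_i\sigma_j$ for $|i-j|=1$, $\sigma_i\sigma_j=\sigma_j\sigma_i$ for $|i-j|>1$; $B_\infty$ is the braid group on generators $\sigma_1,\sigma_2,\dots$ with the same relations, and $B_m\subset B_{m+1}\subset B_\infty$ via the generators. The shift $d$ is the monomorphism of $B_\infty$ induced by $\sigma_{i_1}^{\varepsilon_1}\cdots\sigma_{i_k}^{\varepsilon_k}\mapsto \sigma_{i_1+1}^{\varepsilon_1}\cdots\sigma_{i_k+1}^{\varepsilon_k}$. The shifted conjugacy operator is $a*b = a\cdot d(b)\cdot \sigma_1\cdot d(a^{-1})$ for $a,b\in B_\infty$. Also $\delta_{n+1} = \sigma_{n}\sigma_{n-1}\cdots\sigma_1 \in B_{n+1}$. *)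

theory Defs
  imports Main
begin

text \<open>Braid words: a letter (i, True) is the Artin generator sigma_i, (i, False) is its inverse.\<close>
type_synonym bword = "(nat \<times> bool) list"

definition binv :: "bword \<Rightarrow> bword" where
  "binv w = rev (map (\<lambda>(i, b). (i, \<not> b)) w)"

definition in_B :: "nat \<Rightarrow> bword \<Rightarrow> bool" where
  "in_B m w \<longleftrightarrow> (\<forall>(i, b) \<in> set w. 1 \<le> i \<and> i < m)"

inductive braid_eq :: "nat \<Rightarrow> bword \<Rightarrow> bword \<Rightarrow> bool" for m :: nat where
  refl: "braid_eq m w w"
| sym: "braid_eq m u v \<Longrightarrow> braid_eq m v u"
| trans: "braid_eq m u v \<Longrightarrow> braid_eq m v w \<Longrightarrow> braid_eq m u w"
| ctx: "braid_eq m u v \<Longrightarrow> braid_eq m (a @ u @ c) (a @ v @ c)"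
| cancel: "1 \<le> i \<Longrightarrow> i < m \<Longrightarrow> braid_eq m [(i, b), (i, \<not> b)] []"
| braid: "1 \<le> i \<Longrightarrow> Suc i < m \<Longrightarrow>
    braid_eq m [(i, True), (Suc i, True), (i, True)] [(Suc i, True), (i, True), (Suc i, True)]"
| comm: "1 \<le> i \<Longrightarrow> j < m \<Longrightarrow> Suc i < j \<Longrightarrow>
    braid_eq m [(i, True), (j, True)] [(j, True), (i, True)]"

definition shift :: "bword \<Rightarrow> bword" where
  "shift w = map (\<lambda>(i, b). (Suc i, b)) w"

definition sigma1 :: bword where
  "sigma1 = [(1, True)]"

text \<open>Shifted conjugacy a * b = a d(b) sigma_1 d(a^-1).\<close>
definition shifted_conj :: "bword \<Rightarrow> bword \<Rightarrow> bword" where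
  "shifted_conj a b = a @ shift b @ sigma1 @ shift (binv a)"

text \<open>delta_(n+1) = sigma_n sigma_(n-1) ... sigma_1 (as an element of B_(n+1)).\<close>
definition delta :: "nat \<Rightarrow> bword" where
  "delta n = map (\<lambda>i. (i, True)) (rev [1..<Suc n])"

definition centralizer_B :: "nat \<Rightarrow> bword \<Rightarrow> bword set" where
  "centralizer_B m x = {c. in_B m c \<and> braid_eq m (c @ x) (x @ c)}"

end

theory Submission
  imports Defs
begin

lemmas [trans] = braid_eq.trans

lemma beq_app: "braid_eq m u v \<Longrightarrow> braid_eq m u' v' \<Longrightarrow> braid_eq m (u@u') (v@v')"
proof -
  assume a: "braid_eq m u v" and b: "braid_eq m u' v'"
  have "braid_eq m ([]@u@u') ([]@v@u')" by (rule braid_eq.ctx[OF a])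
  moreover have "braid_eq m (v@u'@[]) (v@v'@[])" by (rule braid_eq.ctx[OF b])
  ultimately show ?thesis by (simp add: braid_eq.trans)
qed

lemma beq_mono: "braid_eq m u v \<Longrightarrow> m \<le> m' \<Longrightarrow> braid_eq m' u v"
  by (induction rule: braid_eq.induct) (auto intro: braid_eq.intros)

lemma in_B_app[simp]: "in_B m (u@v) \<longleftrightarrow> in_B m u \<and> in_B m v"
  unfolding in_B_def by auto

lemma in_B_binv[simp]: "in_B m (binv u) \<longleftrightarrow> in_B m u"
  unfolding in_B_def binv_def by auto

lemma in_B_mono: "in_B m u \<Longrightarrow> m \<le> m' \<Longrightarrow> in_B m' u"
  unfolding in_B_def by auto

lemma binv_binv[simp]: "binv (binv w) = w"
  unfolding binv_def by (induction w) auto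

lemma binv_Cons: "binv (x # w) = binv w @ [(fst x, \<not> snd x)]"
  unfolding binv_def by (cases x) auto

lemma inv_cancel: "in_B m w \<Longrightarrow> braid_eq m (w @ binv w) []"
proof (induction w)
  case Nil then show ?case by (simp add: binv_def braid_eq.refl)
next
  case (Cons x w)
  obtain i b where x: "x = (i,b)" by (cases x)
  have iw: "in_B m w" and ib: "1 \<le> i" "i < m" using Cons.prems x unfolding in_B_def by auto
  have "braid_eq m ([(i,b)] @ (w @ binv w) @ [(i, \<not> b)]) ([(i,b)] @ [] @ [(i, \<not> b)])"
    by (rule braid_eq.ctx[OF Cons.IH[OF iw]])
  also have "braid_eq m ([(i,b)] @ [] @ [(i, \<not> b)]) []"
    using braid_eq.cancel[OF ib] by simp
  finally show ?case by (simp add: x binv_Cons)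
qed

lemma inv_cancel2: "in_B m w \<Longrightarrow> braid_eq m (binv w @ w) []"
  using inv_cancel[of m "binv w"] by simp

fun dl :: "nat \<Rightarrow> bword" where
  "dl 0 = []"
| "dl (Suc k) = (Suc k, True) # dl k"

lemma delta_dl: "delta n = dl n"
  by (induction n) (auto simp: delta_def)

lemma in_B_dl: "in_B (Suc n) (dl n)"
  by (induction n) (auto simp: in_B_def)

lemma comm_any: "1 \<le> i \<Longrightarrow> 1 \<le> j \<Longrightarrow> i < m \<Longrightarrow> j < m \<Longrightarrow> Suc i < j \<or> Suc j < i \<Longrightarrow>
  braid_eq m [(i,True),(j,True)] [(j,True),(i,True)]"
proof -
  assume a: "1 \<le> i" "1 \<le> j" "i < m" "j < m" "Suc i < j \<or> Suc j < i"
  show ?thesis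
  proof (cases "Suc i < j")
    case True then show ?thesis using a by (auto intro: braid_eq.comm)
  next
    case False then show ?thesis using a braid_eq.comm[of j i m] by (auto intro: braid_eq.sym)
  qed
qed

lemma dl_comm: "Suc j < x \<Longrightarrow> x < m \<Longrightarrow> braid_eq m (dl j @ [(x,True)]) ((x,True) # dl j)"
proof (induction j)
  case 0 then show ?case by (simp add: braid_eq.refl)
next
  case (Suc j)
  have "braid_eq m ((Suc j,True) # dl j @ [(x,True)]) ((Suc j,True) # (x,True) # dl j)"
    using braid_eq.ctx[OF Suc.IH, of "[(Suc j,True)]" "[]"] Suc.prems by auto
  also have "braid_eq m ((Suc j,True) # (x,True) # dl j) ((x,True) # (Suc j,True) # dl j)"
    using braid_eq.ctx[OF comm_any, of "Suc j" x m "[]" "dl j"] Suc.prems by auto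
  finally show ?case by simp
qed

lemma dl_letter: "1 \<le> i \<Longrightarrow> Suc i \<le> n \<Longrightarrow>
  braid_eq (Suc n) (dl n @ [(Suc i,True)]) ((i,True) # dl n)"
proof (induction n)
  case 0 then show ?case by simp
next
  case (Suc k)
  show ?case
  proof (cases "k = i")
    case True
    obtain j where i: "i = Suc j" using Suc.prems by (cases i) auto
    have "braid_eq (Suc (Suc k)) ((Suc i,True) # (i,True) # dl j @ [(Suc i,True)])
        ((Suc i,True) # (i,True) # (Suc i,True) # dl j)"
      using braid_eq.ctx[OF dl_comm, of j "Suc i" "Suc (Suc k)" "[(Suc i,True),(i,True)]" "[]"] True i by auto
    also have "braid_eq (Suc (Suc k)) ((Suc i,True) # (i,True) # (Suc i,True) # dl j)
       ((i,True) # (Suc i,True) # (i,True) # dl j)"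
      using braid_eq.ctx[OF braid_eq.sym[OF braid_eq.braid], of i "Suc (Suc k)" "[]" "dl j"] True Suc.prems by auto
    finally show ?thesis using True i by simp
  next
    case False
    hence ik: "Suc i \<le> k" using Suc.prems by auto
    have "braid_eq (Suc (Suc k)) ((Suc k,True) # dl k @ [(Suc i,True)])
        ((Suc k,True) # (i,True) # dl k)"
      using braid_eq.ctx[OF beq_mono[OF Suc.IH[OF Suc.prems(1) ik], of "Suc (Suc k)"], of "[(Suc k,True)]" "[]"] by auto
    also have "braid_eq (Suc (Suc k)) ((Suc k,True) # (i,True) # dl k)
       ((i,True) # (Suc k,True) # dl k)"
      using braid_eq.ctx[OF comm_any, of "Suc k" i "Suc (Suc k)" "[]" "dl k"] ik Suc.prems by auto
    finally show ?thesis by simp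
  qed
qed

lemma ctx_eq: "braid_eq m u v \<Longrightarrow> L = a @ u @ c \<Longrightarrow> R = a @ v @ c \<Longrightarrow> braid_eq m L R"
  using braid_eq.ctx by blast

lemma dl_letter_neg: "1 \<le> i \<Longrightarrow> Suc i \<le> n \<Longrightarrow>
  braid_eq (Suc n) (dl n @ [(Suc i,False)]) ((i,False) # dl n)"
proof -
  assume a: "1 \<le> i" "Suc i \<le> n"
  let ?m = "Suc n"
  have c1: "braid_eq ?m [(i,False),(i,True)] []" using braid_eq.cancel[of i ?m False] a by simp
  have c2: "braid_eq ?m [(Suc i,True),(Suc i,False)] []" using braid_eq.cancel[of "Suc i" ?m True] a by simp
  have "braid_eq ?m (dl n @ [(Suc i,False)]) ((i,False) # (i,True) # dl n @ [(Suc i,False)])"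
    by (rule braid_eq.sym, rule ctx_eq[OF c1, where a="[]" and c="dl n @ [(Suc i,False)]"]) simp_all
  also have "braid_eq ?m ((i,False) # (i,True) # dl n @ [(Suc i,False)])
      ((i,False) # dl n @ [(Suc i,True), (Suc i,False)])"
    by (rule ctx_eq[OF braid_eq.sym[OF dl_letter[OF a]], where a="[(i,False)]" and c="[(Suc i,False)]"]) simp_all
  also have "braid_eq ?m ((i,False) # dl n @ [(Suc i,True),(Suc i,False)]) ((i,False) # dl n)"
    by (rule ctx_eq[OF c2, where a="(i,False) # dl n" and c="[]"]) simp_all
  finally show ?thesis .
qed

lemma dl_shift: "in_B n w \<Longrightarrow> braid_eq (Suc n) (dl n @ shift w) (w @ dl n)"
proof (induction w)
  case Nil then show ?case by (simp add: shift_def braid_eq.refl)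
next
  case (Cons x w)
  obtain i b where x: "x = (i,b)" by (cases x)
  have iw: "in_B n w" and ib: "1 \<le> i" "Suc i \<le> n" using Cons.prems x unfolding in_B_def by auto
  have l: "braid_eq (Suc n) (dl n @ [(Suc i,b)]) ((i,b) # dl n)"
    using dl_letter[OF ib] dl_letter_neg[OF ib] by (cases b) auto
  have "braid_eq (Suc n) (dl n @ (Suc i,b) # shift w) ((i,b) # dl n @ shift w)"
    by (rule ctx_eq[OF l, where a="[]" and c="shift w"]) simp_all
  also have "braid_eq (Suc n) ((i,b) # dl n @ shift w) ((i,b) # w @ dl n)"
    by (rule ctx_eq[OF Cons.IH[OF iw], where a="[(i,b)]" and c="[]"]) simp_all
  finally show ?case by (simp add: x shift_def)
qed

lemma shift_binv_delta: "in_B n s \<Longrightarrow>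
  braid_eq (Suc n) (shift (binv s) @ binv (dl n)) (binv (dl n) @ binv s)"
proof -
  assume s: "in_B n s"
  let ?m = "Suc n" and ?D = "dl n" and ?D' = "binv (dl n)" and ?w = "binv s"
  have D: "in_B ?m ?D" by (rule in_B_dl)
  have w: "in_B n ?w" using s by simp
  have "braid_eq ?m (shift ?w @ ?D') (?D' @ ?D @ shift ?w @ ?D')"
    by (rule braid_eq.sym, rule ctx_eq[OF inv_cancel2[OF D], where a="[]" and c="shift ?w @ ?D'"]) simp_all
  also have "braid_eq ?m (?D' @ ?D @ shift ?w @ ?D') (?D' @ ?w @ ?D @ ?D')"
    by (rule ctx_eq[OF dl_shift[OF w], where a="?D'" and c="?D'"]) simp_all
  also have "braid_eq ?m (?D' @ ?w @ ?D @ ?D') (?D' @ ?w)"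
    by (rule ctx_eq[OF inv_cancel[OF D], where a="?D' @ ?w" and c="[]"]) simp_all
  finally show ?thesis .
qed

theorem proposition2:
  fixes n :: nat and p p' s s' :: bword
  assumes "n \<ge> 2"
    and "in_B n p" and "in_B n p'" and "in_B n s"
    and "braid_eq (Suc n) p' (shifted_conj s p)"
    and "in_B (Suc n) s'"
  shows "braid_eq (Suc n) (p' @ binv (delta n))
            (s' @ shift p @ sigma1 @ binv (delta n) @ binv s')
         \<longleftrightarrow> binv s' @ s \<in> centralizer_B (Suc n) (shift p @ sigma1 @ binv (delta n))"
proof -
  let ?m = "Suc n" and ?D' = "binv (delta n)"
  define X where "X = shift p @ sigma1 @ ?D'"
  have sB: "in_B ?m s" using assms(4) by (rule in_B_mono) simp
  have tB: "in_B ?m s'" by (rule assms(6))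
  have F: "braid_eq ?m (p' @ ?D') (s @ X @ binv s)"
  proof -
    have "braid_eq ?m (p' @ ?D') (shifted_conj s p @ ?D')"
      by (rule beq_app[OF assms(5) braid_eq.refl])
    also have "braid_eq ?m (shifted_conj s p @ ?D') (s @ X @ binv s)"
      by (rule ctx_eq[OF shift_binv_delta[OF assms(4)], where a="s @ shift p @ sigma1" and c="[]"])
        (simp_all add: X_def shifted_conj_def delta_dl)
    finally show ?thesis .
  qed
  have inB: "in_B ?m (binv s' @ s)" using sB tB by simp
  have "braid_eq ?m (s @ X @ binv s) (s' @ X @ binv s') \<longleftrightarrow>
        braid_eq ?m (binv s' @ s @ X) (X @ binv s' @ s)"
  proof
    assume h: "braid_eq ?m (s @ X @ binv s) (s' @ X @ binv s')"
    have "braid_eq ?m (binv s' @ s @ X) (binv s' @ s @ X @ binv s @ s)"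
      by (rule ctx_eq[OF braid_eq.sym[OF inv_cancel2[OF sB]], where a="binv s' @ s @ X" and c="[]"]) simp_all
    also have "braid_eq ?m (binv s' @ s @ X @ binv s @ s) (binv s' @ s' @ X @ binv s' @ s)"
      by (rule ctx_eq[OF h, where a="binv s'" and c="s"]) simp_all
    also have "braid_eq ?m (binv s' @ s' @ X @ binv s' @ s) (X @ binv s' @ s)"
      by (rule ctx_eq[OF inv_cancel2[OF tB], where a="[]" and c="X @ binv s' @ s"]) simp_all
    finally show "braid_eq ?m (binv s' @ s @ X) (X @ binv s' @ s)" .
  next
    assume h: "braid_eq ?m (binv s' @ s @ X) (X @ binv s' @ s)"
    have "braid_eq ?m (s @ X @ binv s) (s' @ binv s' @ s @ X @ binv s)"
      by (rule ctx_eq[OF braid_eq.sym[OF inv_cancel[OF tB]], where a="[]" and c="s @ X @ binv s"]) simp_all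
    also have "braid_eq ?m (s' @ binv s' @ s @ X @ binv s) (s' @ X @ binv s' @ s @ binv s)"
      by (rule ctx_eq[OF h, where a="s'" and c="binv s"]) simp_all
    also have "braid_eq ?m (s' @ X @ binv s' @ s @ binv s) (s' @ X @ binv s')"
      by (rule ctx_eq[OF inv_cancel[OF sB], where a="s' @ X @ binv s'" and c="[]"]) simp_all
    finally show "braid_eq ?m (s @ X @ binv s) (s' @ X @ binv s')" .
  qed
  moreover have "braid_eq ?m (p' @ ?D') (s' @ X @ binv s') \<longleftrightarrow>
        braid_eq ?m (s @ X @ binv s) (s' @ X @ binv s')"
    using F by (meson braid_eq.sym braid_eq.trans)
  ultimately show ?thesis using inB
    by (simp add: X_def centralizer_B_def)
qed

end
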